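(* Let $G$ be a graph on $d+2$ vertices and $k > 1$. Then $G$ is representable in $\mathbb{R}^d$ with ratio $k$ if and only if both of the following hold: (1) $w^T B_G(k) w \geq 0$ for all $w \in \mathbf{1}^{\perp}$; (2) there exists a nonzero vector $w \in \mathbf{1}^{\perp}$ and a real number $\gamma$ such that $B_G(k) w = \gamma \mathbf{1}$.
   Context: Graphs are finite and simple with vertices labeled $1,\dots,d+2$. A finite set $S \subset \mathbb{R}^d$ is a 2-distance set if $\{\|p-q\| : p,q \in S, p\neq q\}$ has exactly two elements $\alpha_1 > \alpha_2$; its distance ratio is $k=\alpha_1/\alpha_2$. Its associated graph has vertex set $S$ with $p,q$ adjacent iff $\|p-q\|=\alpha_1$. $G$ is representable in $\mathbb{R}^d$ with ratio $k$ if some 2-distance set in $\mathbb{R}^d$ with distance ratio $k$ has associated graph $G$. $B_G(k)$ is the $(d+2)\times(d+2)$ matrix with entries $b_{ii}=0$, $b_{ij} = -1$ if $i\neq j$ and $\{i,j\}$ is not an edge, and $b_{ij} = -k^2$ if $\{i,j\}$ is an edge. $\mathbf{1}$ is the all-ones vector and $\mathbf{1}^{\perp}$ its orthogonal complement. *)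

theory Defs
  imports "HOL-Analysis.Analysis"
begin

definition dists :: "'a::metric_space set \<Rightarrow> real set" where
  "dists S = {dist p q | p q. p \<in> S \<and> q \<in> S \<and> p \<noteq> q}"

definition two_distance_set :: "'a::metric_space set \<Rightarrow> bool" where
  "two_distance_set S \<longleftrightarrow> finite S \<and> card (dists S) = 2"

definition distance_ratio :: "'a::metric_space set \<Rightarrow> real" where
  "distance_ratio S = Max (dists S) / Min (dists S)"

definition assoc_adj :: "'a::metric_space set \<Rightarrow> 'a \<Rightarrow> 'a \<Rightarrow> bool" where
  "assoc_adj S p q \<longleftrightarrow> p \<in> S \<and> q \<in> S \<and> p \<noteq> q \<and> dist p q = Max (dists S)"

text \<open>The graph E (on vertex type 'v) is representable in R^d, d = CARD('n), with ratio k: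
  some 2-distance set in R^d with ratio k has associated graph isomorphic to E.\<close>
definition representable :: "('v \<Rightarrow> 'v \<Rightarrow> bool) \<Rightarrow> real \<Rightarrow> 'n::finite itself \<Rightarrow> bool" where
  "representable E k _ \<longleftrightarrow>
     (\<exists>S :: (real^'n) set. two_distance_set S \<and> distance_ratio S = k \<and>
        (\<exists>f. bij_betw f UNIV S \<and> (\<forall>i j. E i j \<longleftrightarrow> assoc_adj S (f i) (f j))))"

definition B_G :: "('v::finite \<Rightarrow> 'v \<Rightarrow> bool) \<Rightarrow> real \<Rightarrow> real^'v^'v" where
  "B_G E k = (\<chi> i j. if i = j then 0 else if E i j then - (k^2) else -1)"

definition ones :: "real^'v::finite" where
  "ones = (\<chi> i. 1)"

end

theory Submission
  imports Defs
begin

lemma ker_exists: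
  fixes L :: "'a::euclidean_space \<Rightarrow> 'b::euclidean_space"
  assumes "linear L" "DIM('b) < DIM('a)"
  shows "\<exists>x. x \<noteq> 0 \<and> L x = 0"
proof (rule ccontr)
  assume "\<not> ?thesis"
  then have "inj L" using assms(1) by (metis linear_inj_iff_eq_0)
  then have "dim (L ` UNIV) = dim (UNIV::'a set)"
    using dim_image_eq assms(1) by (metis inj_on_subset subset_UNIV)
  moreover have "dim (L ` UNIV) \<le> DIM('b)" by (rule dim_subset_UNIV)
  ultimately show False using assms(2) by simp
qed

lemma sym_inner:
  fixes M :: "real^'v::finite^'v"
  assumes "transpose M = M"
  shows "u \<bullet> (M *v v) = v \<bullet> (M *v u)"
proof -
  have "u \<bullet> (M *v v) = (\<Sum>i\<in>UNIV. \<Sum>j\<in>UNIV. u$i * M$i$j * v$j)"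
    by (simp add: inner_vec_def matrix_vector_mult_def sum_distrib_left mult.assoc)
  also have "\<dots> = (\<Sum>j\<in>UNIV. \<Sum>i\<in>UNIV. u$i * M$i$j * v$j)" by (rule sum.swap)
  also have "\<dots> = v \<bullet> (M *v u)"
  proof -
    have "M$i$j = M$j$i" for i j using arg_cong[OF assms, of "\<lambda>A. A$j$i"] by (simp add: transpose_def)
    then show ?thesis
      by (simp add: inner_vec_def matrix_vector_mult_def sum_distrib_left mult.assoc mult.commute mult.left_commute)
  qed
  finally show ?thesis .
qed

lemma ker_subspace: "subspace {u. (M::real^'v::finite^'v) *v u = 0}"
  using linear_subspace_kernel[OF matrix_vector_mul_linear[of M]] by simp

lemma psd_zero:
  fixes M :: "real^'v::finite^'v"
  assumes "transpose M = M" "\<forall>u. u \<bullet> (M *v u) = 0"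
  shows "M *v v = 0"
proof -
  let ?a = "M *v v"
  have "(?a + v) \<bullet> (M *v (?a + v)) = ?a \<bullet> (M *v ?a) + 2 * (?a \<bullet> (M *v v)) + v \<bullet> (M *v v)"
    using sym_inner[OF assms(1), of ?a v]
    by (simp add: matrix_vector_right_distrib inner_add_left inner_add_right)
  then have "?a \<bullet> ?a = 0" using assms(2) by simp
  then show ?thesis by simp
qed

lemma psd_factor:
  fixes M :: "real^'v::finite^'v"
  assumes "transpose M = M" "\<forall>u. u \<bullet> (M *v u) \<ge> 0" "CARD('v) - dim {u. M *v u = 0} \<le> N"
  shows "\<exists>c::nat \<Rightarrow> real^'v. \<forall>u v. u \<bullet> (M *v v) = (\<Sum>k<N. (c k \<bullet> u) * (c k \<bullet> v))"
  using assms
proof (induction N arbitrary: M)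
  case N: (0 M)
  show ?case
  proof (cases "\<forall>u. u \<bullet> (M *v u) = 0")
    case True
    then show ?thesis using psd_zero[OF N(1)] by auto
  next
    case False
    then obtain u0 where "u0 \<bullet> (M *v u0) \<noteq> 0" by auto
    then have "u0 \<notin> {u. M *v u = 0}" by auto
    then have "span {u. M *v u = 0} \<noteq> UNIV" using ker_subspace[of M] by (metis span_eq_iff UNIV_I)
    then have "dim {u. M *v u = 0} \<noteq> DIM(real^'v)" using dim_eq_full by blast
    moreover have "dim {u. M *v u = 0} \<le> DIM(real^'v)" by (rule dim_subset_UNIV)
    ultimately show ?thesis using N(3) by simp
  qed
next
  case (Suc N M)
  show ?case
  proof (cases "\<forall>u. u \<bullet> (M *v u) = 0")
    case True
    then show ?thesis using psd_zero[OF Suc(2)] by (intro exI[of _ "\<lambda>_. 0"]) auto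
  next
    case False
    then obtain u0 where "u0 \<bullet> (M *v u0) \<noteq> 0" by auto
    with Suc(3) have apos: "u0 \<bullet> (M *v u0) > 0" by (metis order_le_less)
    define a where "a = u0 \<bullet> (M *v u0)"
    define m where "m = M *v u0"
    define M' where "M' = M - (1/a) *\<^sub>R (\<chi> i j. m$i * m$j)"
    have apos': "a > 0" using apos a_def by simp
    have M'v: "M' *v v = M *v v - ((m \<bullet> v) / a) *\<^sub>R m" for v
      by (simp add: M'_def vec_eq_iff matrix_vector_mult_def inner_vec_def sum_subtractf
          sum_distrib_left sum_distrib_right sum_divide_distrib field_simps)
    have mv: "m \<bullet> v = u0 \<bullet> (M *v v)" for v
      using sym_inner[OF Suc(2), of u0 v] by (simp add: m_def inner_commute)
    have tM': "transpose M' = M'"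
    proof -
      have "M$i$j = M$j$i" for i j using arg_cong[OF Suc(2), of "\<lambda>A. A$j$i"] by (simp add: transpose_def)
      then show ?thesis by (simp add: M'_def transpose_def vec_eq_iff mult.commute)
    qed
    have psd': "\<forall>u. u \<bullet> (M' *v u) \<ge> 0"
    proof
      fix u
      define t where "t = (m \<bullet> u) / a"
      have "0 \<le> (u - t *\<^sub>R u0) \<bullet> (M *v (u - t *\<^sub>R u0))" using Suc(3) by blast
      also have "\<dots> = u \<bullet> (M *v u) - 2 * t * (m \<bullet> u) + t^2 * a"
        using sym_inner[OF Suc(2), of u u0] mv[of u]
        by (simp add: matrix_vector_mult_diff_distrib matrix_vector_mult_scaleR inner_diff_left
            inner_diff_right a_def m_def power2_eq_square algebra_simps)
      also have "\<dots> = u \<bullet> (M' *v u)"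
        using apos' by (simp add: M'v t_def inner_diff_right power2_eq_square field_simps inner_commute[of u m])
      finally show "u \<bullet> (M' *v u) \<ge> 0" .
    qed
    have kerM: "{u. M *v u = 0} \<subseteq> {u. M' *v u = 0}"
      using mv by (auto simp: M'v)
    have u0k: "u0 \<in> {u. M' *v u = 0}"
      using apos' by (simp add: M'v a_def m_def inner_commute[of "M *v u0" u0])
    have u0n: "u0 \<notin> span {u. M *v u = 0}"
      using apos ker_subspace[of M] by (metis (mono_tags, lifting) span_eq_iff mem_Collect_eq inner_zero_right order_less_irrefl)
    have "dim (insert u0 {u. M *v u = 0}) \<le> dim {u. M' *v u = 0}"
      using kerM u0k by (intro dim_subset) auto
    then have dimle: "dim {u. M *v u = 0} + 1 \<le> dim {u. M' *v u = 0}"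
      using u0n by (simp add: dim_insert)
    have "CARD('v) - dim {u. M' *v u = 0} \<le> N"
      using dimle Suc(4) by linarith
    from Suc.IH[OF tM' psd' this] obtain c where
      c: "\<forall>u v. u \<bullet> (M' *v v) = (\<Sum>k<N. (c k \<bullet> u) * (c k \<bullet> v))" by blast
    define c' where "c' = c(N := (1 / sqrt a) *\<^sub>R m)"
    have "u \<bullet> (M *v v) = (\<Sum>k<Suc N. (c' k \<bullet> u) * (c' k \<bullet> v))" for u v
    proof -
      have "u \<bullet> (M *v v) = u \<bullet> (M' *v v) + (m \<bullet> u) * (m \<bullet> v) / a"
        using apos' by (simp add: M'v inner_diff_right field_simps inner_commute)
      also have "\<dots> = (\<Sum>k<N. (c' k \<bullet> u) * (c' k \<bullet> v)) + (c' N \<bullet> u) * (c' N \<bullet> v)"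
        using c apos' by (simp add: c'_def real_sqrt_mult[symmetric] field_simps)
      finally show ?thesis by simp
    qed
    then show ?thesis by blast
  qed
qed

lemma ones_inner: "w \<bullet> (ones::real^'v::finite) = (\<Sum>j\<in>UNIV. w$j)"
  by (simp add: ones_def inner_vec_def)

lemma gram_calc:
  fixes x :: "'v::finite \<Rightarrow> real^'n::finite" and w :: "real^'v"
  shows "((\<chi> i j. 2 * (x i \<bullet> x j) - x i \<bullet> x i - x j \<bullet> x j) *v w)$i =
     2 * (x i \<bullet> (\<Sum>j\<in>UNIV. w$j *\<^sub>R x j)) - (x i \<bullet> x i) * (\<Sum>j\<in>UNIV. w$j)
       - (\<Sum>j\<in>UNIV. w$j * (x j \<bullet> x j))"
  by (simp add: matrix_vector_mult_def inner_sum_right sum_subtractf sum_distrib_left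
      sum_distrib_right sum.distrib algebra_simps)

lemma aux_sum: "(\<Sum>i\<in>A. (w i::real) * (2 * a i - c i * 0 - K)) = 2 * (\<Sum>i\<in>A. w i * a i) - (\<Sum>i\<in>A. w i) * K"
  by (simp add: sum_subtractf sum_distrib_left sum_distrib_right algebra_simps)

lemma gram_quad:
  fixes x :: "'v::finite \<Rightarrow> real^'n::finite" and w :: "real^'v"
  assumes "(\<Sum>j\<in>UNIV. w$j) = 0"
  shows "w \<bullet> ((\<chi> i j. 2 * (x i \<bullet> x j) - x i \<bullet> x i - x j \<bullet> x j) *v w) =
     2 * ((\<Sum>j\<in>UNIV. w$j *\<^sub>R x j) \<bullet> (\<Sum>j\<in>UNIV. w$j *\<^sub>R x j))"
proof -
  let ?y = "\<Sum>j\<in>UNIV. w$j *\<^sub>R x j"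
  have "w \<bullet> ((\<chi> i j. 2 * (x i \<bullet> x j) - x i \<bullet> x i - x j \<bullet> x j) *v w) =
     (\<Sum>i\<in>UNIV. w$i * (2 * (x i \<bullet> ?y) - (x i \<bullet> x i) * 0 - (\<Sum>j\<in>UNIV. w$j * (x j \<bullet> x j))))"
  proof -
    have eq: "\<And>v. w \<bullet> v = (\<Sum>i\<in>UNIV. w$i * v$i)" by (simp add: inner_vec_def)
    show ?thesis by (simp only: eq gram_calc assms)
  qed
  also have "\<dots> = 2 * (\<Sum>i\<in>UNIV. w$i * (x i \<bullet> ?y)) - (\<Sum>i\<in>UNIV. w$i) * (\<Sum>j\<in>UNIV. w$j * (x j \<bullet> x j))"
    by (rule aux_sum)
  also have "\<dots> = 2 * (?y \<bullet> ?y)"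
    using assms by (simp add: inner_sum_left)
  finally show ?thesis .
qed


lemma B_sym:
  assumes "\<And>i j. E i j \<longleftrightarrow> E j i"
  shows "transpose (B_G E k) = B_G E k"
  using assms by (auto simp: B_G_def transpose_def vec_eq_iff)

lemma forward:
  fixes E :: "'v::finite \<Rightarrow> 'v \<Rightarrow> bool" and k :: real
  assumes card: "CARD('v) = CARD('n::finite) + 2"
    and symE: "\<And>i j. E i j \<longleftrightarrow> E j i"
    and irr: "\<And>i. \<not> E i i"
    and k1: "k > 1"
    and rep: "representable E k TYPE('n)"
  shows "(\<forall>w::real^'v. w \<bullet> ones = 0 \<longrightarrow> w \<bullet> (B_G E k *v w) \<ge> 0) \<and>
            (\<exists>(w::real^'v) (\<gamma>::real). w \<noteq> 0 \<and> w \<bullet> ones = 0 \<and> B_G E k *v w = \<gamma> *\<^sub>R ones)"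
proof -
  from rep obtain S :: "(real^'n) set" and f where S: "two_distance_set S" "distance_ratio S = k"
      "bij_betw f UNIV S" "\<forall>i j. E i j \<longleftrightarrow> assoc_adj S (f i) (f j)"
    unfolding representable_def by blast
  define a where "a = Min (dists S)"
  define b where "b = Max (dists S)"
  from S(1) obtain y1 y2 where y: "dists S = {y1,y2}" "y1 \<noteq> y2"
    unfolding two_distance_set_def card_2_iff by blast
  have amin: "a = min y1 y2" unfolding a_def y by simp
  have bmax: "b = max y1 y2" unfolding b_def y by simp
  have ab: "dists S = {a, b}" using amin bmax unfolding y by (cases "y1 \<le> y2") (simp_all add: min_def max_def insert_commute)
  have inj: "inj f" using bij_betw_imp_inj_on[OF S(3)] .
  have fS: "f i \<in> S" for i by (rule bij_betw_apply[OF S(3)]) simp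
  have dS: "dist (f i) (f j) \<in> dists S" if "i \<noteq> j" for i j
  proof -
    have "f i \<noteq> f j" using inj that by (simp add: inj_eq)
    then show ?thesis unfolding dists_def using fS by blast
  qed
  have "a \<in> dists S" using ab by simp
  then have apos: "a > 0" unfolding dists_def by auto
  have bka: "b = k * a" using S(2) apos unfolding distance_ratio_def a_def[symmetric] b_def[symmetric]
    by (simp add: field_simps)
  have distE: "dist (f i) (f j) = (if E i j then k * a else a)" if "i \<noteq> j" for i j
  proof -
    have "E i j \<longleftrightarrow> dist (f i) (f j) = b"
      using S(4) fS inj that unfolding assoc_adj_def b_def by (auto simp: inj_eq)
    then show ?thesis using dS[OF that] ab bka by auto
  qed
  define x where "x = f"
  have key: "(a^2) *\<^sub>R B_G E k = (\<chi> i j. 2 * (x i \<bullet> x j) - x i \<bullet> x i - x j \<bullet> x j)"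
  proof -
    have sq: "(dist (f i) (f j))^2 = f i \<bullet> f i + f j \<bullet> f j - 2 * (f i \<bullet> f j)" for i j
      by (simp add: dist_norm power2_norm_eq_inner inner_diff_left inner_diff_right inner_commute)
    have "(a^2) * (B_G E k)$i$j = 2 * (x i \<bullet> x j) - x i \<bullet> x i - x j \<bullet> x j" for i j
    proof (cases "i = j")
      case True then show ?thesis by (simp add: B_G_def x_def)
    next
      case False
      have "(a^2) * ((B_G E k)$i$j) = - ((dist (f i) (f j))^2)"
        using distE[OF False] False by (simp add: B_G_def power_mult_distrib)
      then show ?thesis using sq[of i j] by (simp add: x_def)
    qed
    then show ?thesis by (simp add: vec_eq_iff)
  qed
  have a2: "a^2 > 0" using apos by simp
  have c1: "w \<bullet> (B_G E k *v w) \<ge> 0" if "w \<bullet> ones = 0" for w :: "real^'v"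
  proof -
    have "a^2 * (w \<bullet> (B_G E k *v w)) = w \<bullet> (((a^2) *\<^sub>R B_G E k) *v w)"
      by (simp add: scaleR_matrix_vector_assoc[symmetric])
    also have "\<dots> = 2 * ((\<Sum>j\<in>UNIV. w$j *\<^sub>R x j) \<bullet> (\<Sum>j\<in>UNIV. w$j *\<^sub>R x j))"
      unfolding key by (rule gram_quad) (use that in \<open>simp add: ones_inner\<close>)
    also have "\<dots> \<ge> 0" by simp
    finally show ?thesis using a2 by (simp add: zero_le_mult_iff)
  qed
  define L where "L = (\<lambda>w::real^'v. ((\<Sum>j\<in>UNIV. w$j *\<^sub>R x j), w \<bullet> ones))"
  have "linear L"
  proof (rule linearI)
    fix u v :: "real^'v" and c :: real
    have "(\<Sum>j\<in>UNIV. (u + v)$j *\<^sub>R x j) = (\<Sum>j\<in>UNIV. u$j *\<^sub>R x j) + (\<Sum>j\<in>UNIV. v$j *\<^sub>R x j)"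
      by (simp add: scaleR_add_left sum.distrib)
    then show "L (u + v) = L u + L v" unfolding L_def by (simp add: inner_add_left)
    have "(\<Sum>j\<in>UNIV. (c *\<^sub>R u)$j *\<^sub>R x j) = c *\<^sub>R (\<Sum>j\<in>UNIV. u$j *\<^sub>R x j)"
      by (simp add: scaleR_sum_right)
    then show "L (c *\<^sub>R u) = c *\<^sub>R L u" unfolding L_def by simp
  qed
  moreover have "DIM((real^'n) \<times> real) < DIM(real^'v)" using card by simp
  ultimately obtain w where w: "w \<noteq> 0" "L w = 0" using ker_exists by blast
  then have w1: "(\<Sum>j\<in>UNIV. w$j *\<^sub>R x j) = 0" "w \<bullet> ones = 0" by (auto simp: L_def zero_prod_def)
  define K where "K = (\<Sum>j\<in>UNIV. w$j * (x j \<bullet> x j))"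
  have h: "((a^2) *\<^sub>R B_G E k) *v w = (- K) *\<^sub>R ones"
  proof -
    have s0: "(\<Sum>j\<in>UNIV. w$j) = 0" using w1(2) by (simp add: ones_inner)
    show ?thesis unfolding key vec_eq_iff gram_calc w1(1) s0 by (simp add: ones_def K_def)
  qed
  have "B_G E k *v w = inverse (a^2) *\<^sub>R ((a^2) *\<^sub>R (B_G E k *v w))"
    using a2 by simp
  also have "\<dots> = inverse (a^2) *\<^sub>R ((- K) *\<^sub>R ones)"
    using h by (simp only: scaleR_matrix_vector_assoc)
  also have "\<dots> = (inverse (a^2) * (- K)) *\<^sub>R ones" by simp
  finally have "B_G E k *v w = (inverse (a^2) * (- K)) *\<^sub>R ones" .
  then show ?thesis using c1 w(1) w1(2) by blast
qed


lemma const_offdiag_kernel: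
  fixes B :: "real^'v::finite^'v" and w :: "real^'v"
  assumes "\<And>i j. i \<noteq> j \<Longrightarrow> B$i$j = c" "\<And>i. B$i$i = 0" "c \<noteq> 0"
    and "w \<bullet> ones = 0" "B *v w = \<gamma> *\<^sub>R ones"
  shows "w = 0"
proof -
  have s0: "(\<Sum>j\<in>UNIV. w$j) = 0" using assms(4) by (simp add: ones_inner)
  have Bw: "(B *v w)$i = - c * w$i" for i
  proof -
    have "(B *v w)$i = (\<Sum>j\<in>UNIV. c * w$j - (if j = i then c * w$j else 0))"
      unfolding matrix_vector_mult_def using assms(1,2)
      by (auto intro!: sum.cong)
    also have "\<dots> = c * (\<Sum>j\<in>UNIV. w$j) - c * w$i"
      by (simp add: sum_subtractf sum_distrib_left)
    finally show ?thesis using s0 by simp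
  qed
  have g: "- c * w$i = \<gamma>" for i using arg_cong[OF assms(5), of "\<lambda>v. v$i"] Bw[of i]
    by (simp add: ones_def)
  have "(\<Sum>j\<in>UNIV. - c * w$j) = of_nat CARD('v) * \<gamma>" using g by simp
  moreover have "(\<Sum>j\<in>UNIV. - c * w$j) = - c * (\<Sum>j\<in>UNIV. w$j)" by (simp only: sum_distrib_left)
  ultimately have "of_nat CARD('v) * \<gamma> = 0" using s0 by simp
  then have "\<gamma> = 0" by simp
  then show ?thesis using g assms(3) by (simp add: vec_eq_iff)
qed

definition Pm :: "real^'v::finite^'v" where
  "Pm = (\<chi> i j. (if i = j then 1 else 0) - 1 / real CARD('v))"

lemma ones_ones: "(ones::real^'v::finite) \<bullet> ones = real CARD('v)"
  by (simp add: inner_vec_def ones_def)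

lemma Pm_v: "Pm *v u = u - ((u \<bullet> ones) / real CARD('v::finite)) *\<^sub>R (ones::real^'v)"
proof -
  have "(Pm *v u)$i = u$i - (u \<bullet> ones) / real CARD('v)" for i
  proof -
    have "(Pm *v u)$i = (\<Sum>j\<in>UNIV. (if i = j then u$j else 0) - u$j / real CARD('v))"
      by (auto simp: Pm_def matrix_vector_mult_def left_diff_distrib intro!: sum.cong)
    also have "\<dots> = u$i - (\<Sum>j\<in>UNIV. u$j) / real CARD('v)"
      by (simp add: sum_subtractf sum_divide_distrib)
    finally show ?thesis by (simp add: ones_inner)
  qed
  then show ?thesis by (simp add: vec_eq_iff ones_def)
qed

lemma Pm_sym: "transpose (Pm::real^'v::finite^'v) = Pm"
  by (simp add: Pm_def transpose_def vec_eq_iff eq_commute)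

lemma Pm_ones: "(Pm *v u) \<bullet> (ones::real^'v::finite) = 0"
  by (simp add: Pm_v inner_diff_left ones_ones)

lemma Pm_fix: "u \<bullet> (ones::real^'v::finite) = 0 \<Longrightarrow> Pm *v u = u"
  by (simp add: Pm_v)

lemma Pm_ones0: "Pm *v (ones::real^'v::finite) = 0"
  by (simp add: Pm_v ones_ones)


lemma axis_B: "axis i 1 \<bullet> ((A::real^'v::finite^'v) *v axis j 1) = A$i$j"
  by (simp add: inner_axis' matrix_vector_mult_basis column_def)

lemma backward:
  fixes E :: "'v::finite \<Rightarrow> 'v \<Rightarrow> bool" and k :: real
  assumes card: "CARD('v) = CARD('n::finite) + 2"
    and symE: "\<And>i j. E i j \<longleftrightarrow> E j i"
    and irr: "\<And>i. \<not> E i i"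
    and k1: "k > 1"
    and c1: "\<forall>w::real^'v. w \<bullet> ones = 0 \<longrightarrow> w \<bullet> (B_G E k *v w) \<ge> 0"
    and w0: "w0 \<noteq> 0" "w0 \<bullet> ones = 0" "B_G E k *v w0 = \<gamma> *\<^sub>R ones"
  shows "representable E k TYPE('n)"
proof -
  define B where "B = B_G E k"
  have Bii: "B$i$i = 0" for i by (simp add: B_def B_G_def)
  have Bsym: "transpose B = B" unfolding B_def by (rule B_sym) (rule symE)
  have edge: "\<exists>i j. i \<noteq> j \<and> E i j"
  proof (rule ccontr)
    assume "\<not> ?thesis"
    then have od: "B$i$j = -1" if "i \<noteq> j" for i j using that by (auto simp: B_def B_G_def)
    have "w0 = 0" by (rule const_offdiag_kernel[of B "-1" w0 \<gamma>, OF od Bii _ w0(2) w0(3)[folded B_def]]) simp_all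
    then show False using w0 by simp
  qed
  have nonedge: "\<exists>i j. i \<noteq> j \<and> \<not> E i j"
  proof (rule ccontr)
    assume "\<not> ?thesis"
    then have od: "B$i$j = - (k^2)" if "i \<noteq> j" for i j using that by (auto simp: B_def B_G_def)
    have "w0 = 0" by (rule const_offdiag_kernel[of B "- (k^2)" w0 \<gamma>, OF od Bii _ w0(2) w0(3)[folded B_def]]) (use k1 in simp_all)
    then show False using w0 by simp
  qed
  define M where "M = (1/2) *\<^sub>R (Pm ** B ** Pm)"
  have Mv: "M *v u = (1/2) *\<^sub>R (Pm *v (B *v (Pm *v u)))" for u
    by (simp add: M_def scaleR_matrix_vector_assoc[symmetric] matrix_vector_mul_assoc matrix_mul_assoc)
  have Msym: "transpose M = M"
    by (simp add: M_def transpose_scalar matrix_transpose_mul Pm_sym Bsym matrix_mul_assoc)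
  have Mpsd: "\<forall>u. u \<bullet> (M *v u) \<ge> 0"
  proof
    fix u :: "real^'v"
    have "u \<bullet> (M *v u) = (1/2) * ((Pm *v u) \<bullet> (B *v (Pm *v u)))"
      unfolding Mv using sym_inner[OF Pm_sym, of u "B *v (Pm *v u)"]
      by (simp add: inner_commute)
    also have "\<dots> \<ge> 0" using c1 Pm_ones[of u] by (simp add: B_def)
    finally show "u \<bullet> (M *v u) \<ge> 0" .
  qed
  have k_ones: "ones \<in> {u. M *v u = 0}" by (simp add: Mv Pm_ones0)
  have k_w0: "w0 \<in> {u. M *v u = 0}"
    using w0 by (simp add: Mv Pm_fix B_def matrix_vector_mult_scaleR Pm_ones0)
  have ones_nz: "(ones::real^'v) \<notin> span {w0}"
  proof
    assume "(ones::real^'v) \<in> span {w0}"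
    then obtain t where t: "ones = t *\<^sub>R w0" by (auto simp: span_singleton)
    have "(ones::real^'v) \<bullet> ones = (t *\<^sub>R w0) \<bullet> ones" by (simp only: t[symmetric])
    also have "\<dots> = t * (w0 \<bullet> ones)" by (rule inner_scaleR_left)
    finally have "(ones::real^'v) \<bullet> ones = t * (w0 \<bullet> ones)" .
    then show False using w0(2) ones_ones[where 'v='v] by simp
  qed
  have "dim {ones, w0} = 2"
    using ones_nz w0(1) by (simp add: dim_insert)
  moreover have "dim {ones, w0} \<le> dim {u. M *v u = 0}"
    using k_ones k_w0 by (intro dim_subset) auto
  ultimately have "CARD('v) - dim {u. M *v u = 0} \<le> CARD('n)" using card by linarith
  from psd_factor[OF Msym Mpsd this] obtain c where
    c: "\<forall>u v. u \<bullet> (M *v v) = (\<Sum>k<CARD('n). (c k \<bullet> u) * (c k \<bullet> v))" by blast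
  obtain h :: "'n \<Rightarrow> nat" where h: "bij_betw h UNIV {0..<CARD('n)}"
    using ex_bij_betw_finite_nat[of "UNIV::'n set"] by auto
  define x :: "'v \<Rightarrow> real^'n" where "x = (\<lambda>i. \<chi> t. c (h t) \<bullet> axis i 1)"
  have dist2: "(dist (x i) (x j))^2 = - B$i$j" if "i \<noteq> j" for i j
  proof -
    define \<delta> :: "real^'v" where "\<delta> = axis i 1 - axis j 1"
    have "(dist (x i) (x j))^2 = (x i - x j) \<bullet> (x i - x j)"
      by (simp add: dist_norm power2_norm_eq_inner)
    also have "\<dots> = (\<Sum>t\<in>UNIV. ((x i - x j)$t) * ((x i - x j)$t))"
      by (simp only: inner_vec_def inner_real_def)
    also have "\<dots> = (\<Sum>t\<in>UNIV. (c (h t) \<bullet> \<delta>) * (c (h t) \<bullet> \<delta>))"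
    proof -
      have comp: "(x i - x j)$t = c (h t) \<bullet> \<delta>" for t by (simp add: x_def \<delta>_def inner_diff_right)
      show ?thesis by (simp only: comp)
    qed
    also have "\<dots> = (\<Sum>k\<in>{0..<CARD('n)}. (c k \<bullet> \<delta>) * (c k \<bullet> \<delta>))"
      by (rule sum.reindex_bij_betw[OF h])
    also have "\<dots> = \<delta> \<bullet> (M *v \<delta>)" using c by (simp add: atLeast0LessThan)
    also have "\<dots> = (1/2) * (\<delta> \<bullet> (B *v \<delta>))"
    proof -
      have d1: "\<delta> \<bullet> ones = 0" by (simp add: \<delta>_def inner_diff_left ones_def inner_axis')
      have "\<delta> \<bullet> (M *v \<delta>) = (1/2) * (\<delta> \<bullet> (Pm *v (B *v \<delta>)))"
        by (simp add: Mv Pm_fix[OF d1])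
      also have "\<delta> \<bullet> (Pm *v (B *v \<delta>)) = (B *v \<delta>) \<bullet> (Pm *v \<delta>)"
        by (rule sym_inner[OF Pm_sym])
      finally show ?thesis by (simp add: Pm_fix[OF d1] inner_commute)
    qed
    also have "\<dots> = - B$i$j"
    proof -
      have "B$j$i = B$i$j" using arg_cong[OF Bsym, of "\<lambda>A. A$i$j"] by (simp add: transpose_def)
      then show ?thesis
        by (simp add: \<delta>_def inner_diff_left inner_diff_right matrix_vector_mult_diff_distrib axis_B Bii)
    qed
    finally show ?thesis .
  qed
  have distx: "dist (x i) (x j) = (if E i j then k else 1)" if "i \<noteq> j" for i j
  proof -
    have h1: "(dist (x i) (x j))^2 = (if E i j then k else 1)^2"
      using dist2[OF that] that by (simp add: B_def B_G_def)
    have h2: "0 \<le> (if E i j then k else (1::real))" using k1 by simp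
    show ?thesis by (rule power2_eq_imp_eq[OF h1 zero_le_dist h2])
  qed
  have injx: "inj x"
  proof (rule injI, rule ccontr)
    fix i j assume "x i = x j" "i \<noteq> j"
    then show False using distx[of i j] k1 by (auto split: if_splits)
  qed
  define S where "S = range x"
  have dS: "dists S = {1, k}"
  proof
    show "dists S \<subseteq> {1, k}"
    proof
      fix d assume "d \<in> dists S"
      then obtain i j where d: "d = dist (x i) (x j)" "x i \<noteq> x j" unfolding dists_def S_def by auto
      then have "i \<noteq> j" by auto
      then show "d \<in> {1, k}" using distx[of i j] d(1) by simp
    qed
    obtain i j where ij: "i \<noteq> j" "E i j" using edge by blast
    obtain i' j' where ij': "i' \<noteq> j'" "\<not> E i' j'" using nonedge by blast
    have "x i \<noteq> x j" using injx ij(1) by (simp add: inj_eq)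
    moreover have "k = dist (x i) (x j)" using distx[OF ij(1)] ij(2) by simp
    ultimately have "\<exists>p q. k = dist p q \<and> p \<in> range x \<and> q \<in> range x \<and> p \<noteq> q"
      by (intro exI[of _ "x i"] exI[of _ "x j"]) simp
    then have "k \<in> dists S" unfolding dists_def S_def by simp
    have "x i' \<noteq> x j'" using injx ij'(1) by (simp add: inj_eq)
    moreover have "1 = dist (x i') (x j')" using distx[OF ij'(1)] ij'(2) by simp
    ultimately have "\<exists>p q. 1 = dist p q \<and> p \<in> range x \<and> q \<in> range x \<and> p \<noteq> q"
      by (intro exI[of _ "x i'"] exI[of _ "x j'"]) simp
    then have "1 \<in> dists S" unfolding dists_def S_def by simp
    with \<open>k \<in> dists S\<close> show "{1, k} \<subseteq> dists S" by simp
  qed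
  have tds: "two_distance_set S" unfolding two_distance_set_def dS using k1 by (simp add: S_def)
  have mx: "Max (dists S) = k" "Min (dists S) = 1" using k1 by (simp_all add: dS)
  have dr: "distance_ratio S = k" unfolding distance_ratio_def mx by simp
  have bij: "bij_betw x UNIV S" unfolding S_def using injx by (simp add: bij_betw_imageI)
  have adj: "\<forall>i j. E i j \<longleftrightarrow> assoc_adj S (x i) (x j)"
  proof (intro allI)
    fix i j
    show "E i j \<longleftrightarrow> assoc_adj S (x i) (x j)"
    proof (cases "i = j")
      case True then show ?thesis using irr by (simp add: assoc_adj_def)
    next
      case False
      then have "x i \<noteq> x j" using injx by (simp add: inj_eq)
      then show ?thesis using distx[OF False] k1 False
        unfolding assoc_adj_def mx by (auto simp: S_def)
    qed
  qed
  show ?thesis unfolding representable_def using tds dr bij adj by blast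
qed


theorem proposition3p2:
  fixes E :: "'v::finite \<Rightarrow> 'v \<Rightarrow> bool" and k :: real
  assumes "CARD('v) = CARD('n::finite) + 2"
    and "\<And>i j. E i j \<longleftrightarrow> E j i"
    and "\<And>i. \<not> E i i"
    and "k > 1"
  shows "representable E k TYPE('n) \<longleftrightarrow>
           ((\<forall>w::real^'v. w \<bullet> ones = 0 \<longrightarrow> w \<bullet> (B_G E k *v w) \<ge> 0) \<and>
            (\<exists>(w::real^'v) (\<gamma>::real). w \<noteq> 0 \<and> w \<bullet> ones = 0 \<and> B_G E k *v w = \<gamma> *\<^sub>R ones))"
proof
  assume "representable E k TYPE('n)"
  then show "(\<forall>w::real^'v. w \<bullet> ones = 0 \<longrightarrow> w \<bullet> (B_G E k *v w) \<ge> 0) \<and>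
            (\<exists>(w::real^'v) (\<gamma>::real). w \<noteq> 0 \<and> w \<bullet> ones = 0 \<and> B_G E k *v w = \<gamma> *\<^sub>R ones)"
    using forward[of E k, OF assms] by blast
next
  assume h: "(\<forall>w::real^'v. w \<bullet> ones = 0 \<longrightarrow> w \<bullet> (B_G E k *v w) \<ge> 0) \<and>
            (\<exists>(w::real^'v) (\<gamma>::real). w \<noteq> 0 \<and> w \<bullet> ones = 0 \<and> B_G E k *v w = \<gamma> *\<^sub>R ones)"
  then obtain w \<gamma> where w: "(w::real^'v) \<noteq> 0" "w \<bullet> ones = 0" "B_G E k *v w = \<gamma> *\<^sub>R ones" by blast
  show "representable E k TYPE('n)"
    by (rule backward[of E k w \<gamma>, OF assms conjunct1[OF h] w])
qed

end
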